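(* Fix an integer $k\ge 2$. Let $M$ be the set consisting of the empty composition together with all Fibonacci compositions that start with $(2,1^{k-2})$. Then $M$ is a free monoid under concatenation, and its primes are exactly the compositions of the form $(2,1^{k-2},1^i,q)$ where $i\ge 0$ is an integer and $q$ is either empty or a Fibonacci composition that starts with $2$ and does not contain $(2,1^{k-2})$ as a block of consecutive parts. Moreover, with the weight of a composition being the sum of its parts, the generating function for the primes of $M$ is $\dfrac{x^k}{1-x-x^2+x^k}$, and hence $$1+\frac{x^k}{1-x-x^2}=\Bigl(1-\frac{x^k}{1-x-x^2+x^k}\Bigr)^{-1}.$$
   Context: A Fibonacci composition is a composition (finite sequence of positive integers) all of whose parts are $1$ or $2$; the Fibonacci compositions form the free monoid $\{1,2\}^*$ under concatenation. $1^j$ denotes $j$ consecutive parts equal to $1$. A free monoid is one in which every element factors uniquely as a product of elements of a set of primes. The generating function of a set $S$ of compositions is $\sum_{c\in S} x^{|c|}$ where $|c|$ is the sum of the parts of $c$. *)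

theory Defs
  imports "HOL-Library.Sublist" "HOL-Computational_Algebra.Formal_Power_Series"
begin

definition fib_comp :: "nat list \<Rightarrow> bool" where
  "fib_comp c \<longleftrightarrow> set c \<subseteq> {1, 2}"

definition free_monoid_with_primes :: "'a list set \<Rightarrow> 'a list set \<Rightarrow> bool" where
  "free_monoid_with_primes M P \<longleftrightarrow>
     [] \<in> M \<and> (\<forall>a\<in>M. \<forall>b\<in>M. a @ b \<in> M) \<and> P \<subseteq> M \<and>
     (\<forall>c\<in>M. \<exists>!ps. set ps \<subseteq> P \<and> concat ps = c)"

definition monoid_primes :: "'a list set \<Rightarrow> 'a list set" where
  "monoid_primes M = {c \<in> M. c \<noteq> [] \<and>
      \<not> (\<exists>a\<in>M. \<exists>b\<in>M. a \<noteq> [] \<and> b \<noteq> [] \<and> c = a @ b)}"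

definition comp_gf :: "nat list set \<Rightarrow> real fps" where
  "comp_gf S = Abs_fps (\<lambda>n. real (card {c \<in> S. sum_list c = n}))"

end

theory Submission
  imports Defs
begin


definition Wd :: "nat \<Rightarrow> nat list" where "Wd k = 2 # replicate (k - 2) 1"
definition Md :: "nat \<Rightarrow> nat list set" where
  "Md k = {[]} \<union> {c. fib_comp c \<and> prefix (Wd k) c}"
definition Pd :: "nat \<Rightarrow> nat list set" where
  "Pd k = {Wd k @ replicate i 1 @ q | i q.
                   q = [] \<or> (fib_comp q \<and> q \<noteq> [] \<and> hd q = 2 \<and> \<not> sublist (Wd k) q)}"

lemma fib_append[simp]: "fib_comp (a @ b) \<longleftrightarrow> fib_comp a \<and> fib_comp b"
  by (auto simp: fib_comp_def)
lemma fib_Cons[simp]: "fib_comp (x # b) \<longleftrightarrow> (x = 1 \<or> x = 2) \<and> fib_comp b"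
  by (auto simp: fib_comp_def)
lemma fib_Nil[simp]: "fib_comp []" by (simp add: fib_comp_def)
lemma fib_rep[simp]: "fib_comp (replicate i 1)" by (simp add: fib_comp_def set_replicate_conv_if)
lemma fib_rep'[simp]: "fib_comp (replicate i (Suc 0))" using fib_rep[of i] by simp
lemma prefix_nth': "prefix xs ys \<Longrightarrow> i < length xs \<Longrightarrow> xs ! i = ys ! i"
  by (auto simp: prefix_def nth_append)

lemma Wd_ne[simp]: "Wd k \<noteq> []" by (simp add: Wd_def)
lemma Wd_len: "length (Wd k) = Suc (k - 2)" by (simp add: Wd_def)
lemma Wd_nth0: "Wd k ! 0 = 2" by (simp add: Wd_def)
lemma Wd_nth: "0 < j \<Longrightarrow> j < length (Wd k) \<Longrightarrow> Wd k ! j = 1"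
  by (cases j) (auto simp: Wd_def)
lemma Wd_fib[simp]: "fib_comp (Wd k)" by (simp add: Wd_def fib_comp_def set_replicate_conv_if)
lemma Wd_sum: "k \<ge> 2 \<Longrightarrow> sum_list (Wd k) = k"
  by (simp add: Wd_def sum_list_replicate)

lemma P_occ:
  assumes "p \<in> Pd k" "p = a @ b" "prefix (Wd k) b"
  shows "a = []"
proof (rule ccontr)
  assume an: "a \<noteq> []"
  obtain i q where p: "p = Wd k @ replicate i 1 @ q"
    and cq: "q = [] \<or> (fib_comp q \<and> q \<noteq> [] \<and> hd q = 2 \<and> \<not> sublist (Wd k) q)"
    using assms(1) unfolding Pd_def by blast
  obtain e where b: "b = Wd k @ e" using assms(3) prefix_def by blast
  show False
  proof (cases "length a < length (Wd k) + i")
    case True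
    have "p ! length a = b ! 0" using assms(2) by (simp add: nth_append)
    also have "\<dots> = 2" using b by (simp add: Wd_def)
    finally have 1: "p ! length a = 2" .
    have "p ! length a = 1"
    proof (cases "length a < length (Wd k)")
      case True
      then show ?thesis using an p Wd_nth[of "length a" k] by (simp add: nth_append)
    next
      case False
      have "length a - length (Wd k) < i" using False \<open>length a < length (Wd k) + i\<close> by linarith
      then show ?thesis using False p by (simp add: nth_append)
    qed
    with 1 show False by simp
  next
    case False
    have "(Wd k @ replicate i 1) @ q = a @ b" using p assms(2) by simp
    then obtain d where "q = d @ b" using False
      by (subst (asm) append_eq_append_conv_if) (auto split: if_splits)
    then have "sublist (Wd k) q" using b by (auto simp: sublist_def)
    moreover have "q \<noteq> []" using \<open>q = d @ b\<close> b by simp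
    ultimately show False using cq by blast
  qed
qed

lemma P_ne: "p \<in> Pd k \<Longrightarrow> p \<noteq> []" by (auto simp: Pd_def)
lemma P_sub_M: "Pd k \<subseteq> Md k" by (auto simp: Pd_def Md_def)
lemma M_app: "a \<in> Md k \<Longrightarrow> b \<in> Md k \<Longrightarrow> a @ b \<in> Md k"
  by (auto simp: Md_def prefix_def)
lemma M_Nil[simp]: "[] \<in> Md k" by (simp add: Md_def)

lemma P_cancel_aux:
  assumes "p \<in> Pd k" "p' \<in> Pd k" "x \<in> Md k" "y \<in> Md k" "p @ x = p' @ y"
    "length p \<le> length p'"
  shows "p = p'"
proof -
  obtain z where z: "p' = p @ z" "x = z @ y" using assms(5,6)
    by (auto simp: append_eq_append_conv2)
  show ?thesis
  proof (cases "z = []")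
    case True then show ?thesis using z by simp
  next
    case zn: False
    then have "x \<noteq> []" using z by simp
    then have px: "prefix (Wd k) x" using assms(3) by (auto simp: Md_def)
    show ?thesis
    proof (cases "length (Wd k) \<le> length z")
      case True
      then have "prefix (Wd k) z" using px z
        by (metis prefix_append prefix_length_prefix prefix_order.order_refl)
      then have "p = []" using P_occ[OF assms(2) z(1)] by simp
      then show ?thesis using P_ne[OF assms(1)] by simp
    next
      case False
      show ?thesis
      proof (cases "y = []")
        case True
        then show ?thesis using px z False prefix_length_le by fastforce
      next
        case yn: False
        then have py: "prefix (Wd k) y" using assms(4) by (auto simp: Md_def)
        have "y ! 0 = 2" using py Wd_nth0 by (metis Wd_ne length_greater_0_conv prefix_nth')
        moreover have "Wd k ! length z = x ! length z"
          using px False by (metis not_le prefix_nth')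
        moreover have "x ! length z = y ! 0" using z by (simp add: nth_append)
        moreover have "Wd k ! length z = 1" using False zn Wd_nth by simp
        ultimately show ?thesis by simp
      qed
    qed
  qed
qed

lemma P_cancel:
  assumes "p \<in> Pd k" "p' \<in> Pd k" "x \<in> Md k" "y \<in> Md k" "p @ x = p' @ y"
  shows "p = p'"
  using P_cancel_aux[OF assms] P_cancel_aux[OF assms(2,1,4,3) assms(5)[symmetric]]
  by (metis nat_le_linear)

lemma concat_M: "set ps \<subseteq> Pd k \<Longrightarrow> concat ps \<in> Md k"
  by (induction ps) (auto intro: M_app dest: subsetD[OF P_sub_M])

lemma unique_fact: "set ps \<subseteq> Pd k \<Longrightarrow> set qs \<subseteq> Pd k \<Longrightarrow> concat ps = concat qs \<Longrightarrow> ps = qs"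
proof (induction ps arbitrary: qs)
  case Nil
  then show ?case using P_ne by (cases qs) fastforce+
next
  case (Cons p ps)
  show ?case
  proof (cases qs)
    case Nil
    then show ?thesis using Cons.prems P_ne by fastforce
  next
    case qc: (Cons q qs')
    with Cons.prems have "p = q"
      using P_cancel[of p k q "concat ps" "concat qs'"] concat_M[of ps k] concat_M[of qs' k]
      by auto
    with qc Cons.prems Cons.IH[of qs'] show ?thesis by auto
  qed
qed

lemma split_ones: "\<exists>i r'. r = replicate i (1::nat) @ r' \<and> (r' = [] \<or> hd r' \<noteq> 1)"
proof (induction r)
  case Nil then show ?case by auto
next
  case (Cons x r)
  then obtain i r' where "r = replicate i 1 @ r'" "r' = [] \<or> hd r' \<noteq> 1" by blast
  then show ?case
    by (cases "x = 1") (auto intro: exI[of _ "Suc i"] exI[of _ 0])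
qed



lemma first_occ: "w \<noteq> [] \<Longrightarrow> sublist w r \<Longrightarrow> \<exists>a b. r = a @ b \<and> prefix w b \<and> \<not> sublist w a"
proof (induction r)
  case Nil then show ?case by simp
next
  case (Cons x r)
  show ?case
  proof (cases "prefix w (x # r)")
    case True then show ?thesis using Cons.prems(1) by (metis append_Nil sublist_Nil_right)
  next
    case False
    then have "sublist w r" using Cons.prems sublist_Cons_right by metis
    then obtain a b where ab: "r = a @ b" "prefix w b" "\<not> sublist w a" using Cons by blast
    have "\<not> prefix w (x # a)" using False ab
      by (metis append_Cons prefix_prefix)
    then have "\<not> sublist w (x # a)" using ab(3) sublist_Cons_right by metis
    then show ?thesis using ab by (intro exI[of _ "x # a"] exI[of _ b]) auto
  qed
qed

lemma exists_fact:
  assumes "k \<ge> 2" shows "c \<in> Md k \<Longrightarrow> \<exists>ps. set ps \<subseteq> Pd k \<and> concat ps = c"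
proof (induction "length c" arbitrary: c rule: less_induct)
  case less
  show ?case
  proof (cases "c = []")
    case True then show ?thesis by (intro exI[of _ "[]"]) auto
  next
    case cn: False
    then have fc: "fib_comp c" and "prefix (Wd k) c" using less.prems by (auto simp: Md_def)
    then obtain r where c: "c = Wd k @ r" using prefix_def by blast
    obtain i r' where r: "r = replicate i 1 @ r'" "r' = [] \<or> hd r' \<noteq> 1"
      using split_ones by blast
    have fr': "fib_comp r'" using fc c r by simp
    have hr': "r' = [] \<or> hd r' = 2" using r(2) fr' by (cases r') auto
    show ?thesis
    proof (cases "sublist (Wd k) r'")
      case False
      then have "c \<in> Pd k" unfolding Pd_def using c r fr' hr' by blast
      then show ?thesis by (intro exI[of _ "[c]"]) auto
    next
      case True
      then obtain a b where ab: "r' = a @ b" "prefix (Wd k) b" "\<not> sublist (Wd k) a"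
        using first_occ[OF Wd_ne] by blast
      have pa: "Wd k @ replicate i 1 @ a \<in> Pd k"
      proof (cases "a = []")
        case True then show ?thesis unfolding Pd_def by blast
      next
        case False
        then have "hd a = 2" using hr' ab by auto
        then show ?thesis unfolding Pd_def using False ab fr' by auto
      qed
      have bM: "b \<in> Md k" using ab fr' by (auto simp: Md_def)
      have "length b < length c" using c r ab by simp
      then obtain ps where "set ps \<subseteq> Pd k" "concat ps = b" using less bM by blast
      then show ?thesis using pa c r ab
        by (intro exI[of _ "(Wd k @ replicate i 1 @ a) # ps"]) auto
    qed
  qed
qed



lemma len_le_sum: "fib_comp c \<Longrightarrow> length c \<le> sum_list c"
  by (induction c) auto

lemma fin_level: "finite {c. fib_comp c \<and> sum_list c = n}"
proof (rule finite_subset)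
  show "{c. fib_comp c \<and> sum_list c = n} \<subseteq> {xs. set xs \<subseteq> {1,2} \<and> length xs \<le> n}"
    using len_le_sum by (auto simp: fib_comp_def)
qed (rule finite_lists_length_le, simp)

lemma fin_level_sub: "S \<subseteq> {c. fib_comp c} \<Longrightarrow> finite {c\<in>S. sum_list c = n}"
  by (rule finite_subset[OF _ fin_level[of n]]) auto

definition FC :: "nat \<Rightarrow> nat list set" where "FC n = {c. fib_comp c \<and> sum_list c = n}"

lemma FC0_aux: "fib_comp c \<Longrightarrow> sum_list c = 0 \<Longrightarrow> c = []"
  by (cases c) auto
lemma FC0: "FC 0 = {[]}"
  unfolding FC_def
proof (rule set_eqI)
  fix c show "c \<in> {c. fib_comp c \<and> sum_list c = 0} \<longleftrightarrow> c \<in> {[]}"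
    using FC0_aux[of c] by auto
qed

lemma FC1: "FC 1 = {[1]}"
proof -
  have "c = [1]" if "fib_comp c" "sum_list c = 1" for c
  proof (cases c)
    case Nil then show ?thesis using that by simp
  next
    case (Cons x c')
    then have "x \<ge> 1" using that by auto
    moreover have "x + sum_list c' = 1" using that Cons by simp
    ultimately have "x = 1" "sum_list c' = 0" by linarith+
    moreover have "fib_comp c'" using that Cons by simp
    ultimately have "c' \<in> FC 0" unfolding FC_def by simp
    then have "c' = []" unfolding FC0 by simp
    then show ?thesis using Cons \<open>x = 1\<close> by simp
  qed
  note * = this
  show ?thesis
  proof (rule set_eqI)
    fix c show "c \<in> FC 1 \<longleftrightarrow> c \<in> {[1]}"
    proof
      assume "c \<in> FC 1" then show "c \<in> {[1]}" using *[of c] unfolding FC_def by blast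
    next
      assume "c \<in> {[1]}" then show "c \<in> FC 1" unfolding FC_def by simp
    qed
  qed
qed
lemma FC1': "FC (Suc 0) = {[1]}" using FC1 by simp

lemma FCSS: "FC (Suc (Suc n)) = Cons 1 ` FC (Suc n) \<union> Cons 2 ` FC n"
proof
  show "FC (Suc (Suc n)) \<subseteq> Cons 1 ` FC (Suc n) \<union> Cons 2 ` FC n"
  proof
    fix c assume "c \<in> FC (Suc (Suc n))"
    then have c: "fib_comp c" "sum_list c = Suc (Suc n)" by (auto simp: FC_def)
    then obtain x c' where xc: "c = x # c'" by (cases c) auto
    have fc': "fib_comp c'" using c xc by auto
    have "x = 1 \<or> x = 2" using c xc by auto
    then show "c \<in> Cons 1 ` FC (Suc n) \<union> Cons 2 ` FC n"
    proof
      assume "x = 1" then have "c' \<in> FC (Suc n)" using c xc \<open>fib_comp c'\<close> by (simp add: FC_def)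
      then show ?thesis using xc \<open>x = 1\<close> by blast
    next
      assume "x = 2" then have "c' \<in> FC n" using c xc \<open>fib_comp c'\<close> by (simp add: FC_def)
      then show ?thesis using xc \<open>x = 2\<close> by blast
    qed
  qed
qed (auto simp: FC_def)

lemma card_FCSS: "card (FC (Suc (Suc n))) = card (FC (Suc n)) + card (FC n)"
proof -
  have "card (FC (Suc (Suc n))) = card (Cons 1 ` FC (Suc n)) + card (Cons 2 ` FC n)"
    unfolding FCSS by (rule card_Un_disjoint) (auto simp: FC_def fin_level)
  also have "\<dots> = card (FC (Suc n)) + card (FC n)"
    by (simp add: card_image)
  finally show ?thesis .
qed

definition Ff :: "real fps" where "Ff = Abs_fps (\<lambda>n. real (card (FC n)))"


lemma Ff_E: "(1 - fps_X - fps_X^2) * Ff = 1"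
proof (rule fps_ext)
  fix n
  have e: "(1 - fps_X - fps_X^2) * Ff = Ff - fps_X * Ff - fps_X^2 * Ff" by (simp add: algebra_simps)
  have "fps_nth (Ff - fps_X * Ff - fps_X^2 * Ff) n = fps_nth (1 :: real fps) n"
  proof (cases n)
    case 0 then show ?thesis by (simp add: Ff_def fps_X_power_mult_nth FC0)
  next
    case (Suc m)
    then show ?thesis
    proof (cases m)
      case 0 then show ?thesis using Suc by (simp add: Ff_def fps_X_power_mult_nth FC0 FC1')
    next
      case (Suc j)
      then show ?thesis using \<open>n = Suc m\<close> by (simp add: Ff_def fps_X_power_mult_nth card_FCSS)
    qed
  qed
  then show "fps_nth ((1 - fps_X - fps_X^2) * Ff) n = fps_nth (1 :: real fps) n" unfolding e .
qed

lemma M_level: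
  assumes "k \<ge> 2"
  shows "{c \<in> Md k. sum_list c = n} =
    {c. c = [] \<and> n = 0} \<union> (if k \<le> n then (\<lambda>f. Wd k @ f) ` FC (n - k) else {})"
proof -
  have "c \<in> Md k \<longleftrightarrow> c = [] \<or> (\<exists>f. fib_comp f \<and> c = Wd k @ f)" for c
    by (auto simp: Md_def prefix_def)
  then show ?thesis using assms Wd_sum[OF assms] by (auto simp: FC_def)
qed

lemma M_gf:
  assumes "k \<ge> 2"
  shows "comp_gf (Md k) = 1 + fps_X ^ k * Ff"
proof (rule fps_ext)
  fix n
  have inj: "inj_on ((@) (Wd k)) A" for A by (simp add: inj_on_def)
  have "card {c \<in> Md k. sum_list c = n} = (if n = 0 then 1 else 0) + (if k \<le> n then card (FC (n-k)) else 0)"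
  proof (cases "k \<le> n")
    case True
    then have "n \<noteq> 0" using assms by simp
    then have "{c \<in> Md k. sum_list c = n} = (\<lambda>f. Wd k @ f) ` FC (n - k)"
      unfolding M_level[OF assms] using True by simp
    then show ?thesis using True \<open>n \<noteq> 0\<close> card_image[OF inj] by simp
  next
    case False
    then have "{c \<in> Md k. sum_list c = n} = {c. c = [] \<and> n = 0}"
      unfolding M_level[OF assms] by simp
    then show ?thesis using False by simp
  qed
  then show "fps_nth (comp_gf (Md k)) n = fps_nth (1 + fps_X ^ k * Ff) n"
    by (simp add: comp_gf_def fps_X_power_mult_nth Ff_def)
qed

lemma M_sub_fib: "Md k \<subseteq> {c. fib_comp c}" by (auto simp: Md_def)
lemma P_sub_fib: "Pd k \<subseteq> {c. fib_comp c}" using P_sub_M M_sub_fib by blast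

lemma decomp:
  assumes "k \<ge> 2"
  shows "comp_gf (Md k) = 1 + comp_gf (Pd k) * comp_gf (Md k)"
proof (rule fps_ext)
  fix n
  define LP where "LP j = {p\<in>Pd k. sum_list p = j}" for j
  define LM where "LM j = {m\<in>Md k. sum_list m = j}" for j
  define Q where "Q = (\<Union>j\<in>{0..n}. LP j \<times> LM (n - j))"
  have fLP: "finite (LP j)" for j unfolding LP_def by (rule fin_level_sub[OF P_sub_fib])
  have fLM: "finite (LM j)" for j unfolding LM_def by (rule fin_level_sub[OF M_sub_fib])
  have fQ: "finite Q" unfolding Q_def using fLP fLM by blast
  have disj: "(LP i \<times> LM (n - i)) \<inter> (LP j \<times> LM (n - j)) = {}" if "i \<noteq> j" for i j
    using that unfolding LP_def by blast
  have cQ: "card Q = (\<Sum>j=0..n. card (LP j) * card (LM (n - j)))"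
    unfolding Q_def
    by (subst card_UN_disjoint) (use fLP fLM disj in \<open>auto simp: card_cartesian_product\<close>)
  have Qmem: "(p, m) \<in> Q \<longleftrightarrow> p \<in> Pd k \<and> m \<in> Md k \<and> sum_list p + sum_list m = n" for p m
    unfolding Q_def LP_def LM_def by force
  have img: "{c \<in> Md k. c \<noteq> [] \<and> sum_list c = n} = (\<lambda>(p,m). p @ m) ` Q"
  proof
    show "(\<lambda>(p,m). p @ m) ` Q \<subseteq> {c \<in> Md k. c \<noteq> [] \<and> sum_list c = n}"
    proof
      fix c assume "c \<in> (\<lambda>(p,m). p @ m) ` Q"
      then obtain p m where "(p, m) \<in> Q" "c = p @ m" by auto
      then have "p \<in> Pd k" "m \<in> Md k" "sum_list p + sum_list m = n" using Qmem by blast+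
      then show "c \<in> {c \<in> Md k. c \<noteq> [] \<and> sum_list c = n}"
        using \<open>c = p @ m\<close> P_ne[of p k] M_app[of p k m] P_sub_M[of k] by auto
    qed
  next
    show "{c \<in> Md k. c \<noteq> [] \<and> sum_list c = n} \<subseteq> (\<lambda>(p,m). p @ m) ` Q"
    proof
      fix c assume c: "c \<in> {c \<in> Md k. c \<noteq> [] \<and> sum_list c = n}"
      then obtain ps where ps: "set ps \<subseteq> Pd k" "concat ps = c" using exists_fact[OF assms] by blast
      then obtain p ps' where pps: "ps = p # ps'" using c by (cases ps) auto
      then have "p \<in> Pd k" "set ps' \<subseteq> Pd k" "c = p @ concat ps'" using ps by auto
      then have "(p, concat ps') \<in> Q" using Qmem concat_M[of ps' k] c by auto
      then show "c \<in> (\<lambda>(p,m). p @ m) ` Q" using \<open>c = p @ concat ps'\<close>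
        by (simp add: image_iff) (metis case_prod_conv)
    qed
  qed
  have inj: "inj_on (\<lambda>(p,m). p @ m) Q"
  proof (rule inj_onI)
    fix x y assume xy: "x \<in> Q" "y \<in> Q" "(\<lambda>(p,m). p @ m) x = (\<lambda>(p,m). p @ m) y"
    obtain a b c d where x: "x = (a, b)" and y: "y = (c, d)" by (cases x, cases y)
    then have "a \<in> Pd k" "b \<in> Md k" "c \<in> Pd k" "d \<in> Md k" "a @ b = c @ d"
      using xy Qmem by auto
    then have "a = c" using P_cancel by blast
    then show "x = y" using x y \<open>a @ b = c @ d\<close> by simp
  qed
  have hQ: "a \<noteq> []" if "(a,b) \<in> Q" for a b using that Qmem P_ne by blast
  have split: "{c \<in> Md k. sum_list c = n} = {c::nat list. c = [] \<and> n = 0} \<union> {c \<in> Md k. c \<noteq> [] \<and> sum_list c = n}"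
    by auto
  have dj: "{c::nat list. c = [] \<and> n = 0} \<inter> (\<lambda>(p,m). p @ m) ` Q = {}" using hQ by auto
  have "card {c \<in> Md k. sum_list c = n} = card {c::nat list. c = [] \<and> n = 0} + card ((\<lambda>(p,m). p @ m) ` Q)"
  proof -
    have f0: "finite {c::nat list. c = [] \<and> n = 0}" by (cases "n = 0") auto
    show ?thesis unfolding split img
      using card_Un_disjoint[OF f0 finite_imageI[OF fQ] dj] .
  qed
  also have "\<dots> = (if n = 0 then 1 else 0) + card Q" by (simp add: card_image[OF inj])
  finally have "card {c \<in> Md k. sum_list c = n} = (if n = 0 then 1 else 0) + (\<Sum>j=0..n. card (LP j) * card (LM (n - j)))"
    unfolding cQ .
  then show "fps_nth (comp_gf (Md k)) n = fps_nth (1 + comp_gf (Pd k) * comp_gf (Md k)) n"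
    by (simp add: comp_gf_def fps_mult_nth LP_def LM_def)
qed



lemma gf_alg:
  fixes A Mg Ff :: "real fps"
  assumes k: "k \<ge> 2"
    and h1: "Mg = 1 + fps_X ^ k * Ff" and h2: "Mg = 1 + A * Mg"
    and h3: "(1 - fps_X - fps_X^2) * Ff = 1"
  shows "A = fps_X ^ k / (1 - fps_X - fps_X ^ 2 + fps_X ^ k)
     \<and> 1 + fps_X ^ k / (1 - fps_X - fps_X ^ 2)
         = inverse (1 - fps_X ^ k / (1 - fps_X - fps_X ^ 2 + fps_X ^ k) :: real fps)"
proof -
  define E :: "real fps" where "E = 1 - fps_X - fps_X^2"
  define D :: "real fps" where "D = 1 - fps_X - fps_X ^ 2 + fps_X ^ k"
  have DE: "D = E + fps_X ^ k" unfolding D_def E_def by simp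
  have D0: "fps_nth D 0 = 1" using k unfolding D_def by simp
  have E0: "fps_nth E 0 = 1" unfolding E_def by simp
  have EF: "E * Ff = 1" using h3 unfolding E_def .
  have "D * Ff = E * Ff + fps_X ^ k * Ff" unfolding DE by (rule distrib_right)
  then have "D * Ff = Mg" unfolding h1 EF .
  moreover have "A * Mg = fps_X ^ k * Ff" using h1 h2 by simp
  ultimately have "A * D * Ff = fps_X ^ k * Ff" by (simp add: mult.assoc)
  then have "A * D * (E * Ff) = fps_X ^ k * (E * Ff)" by (metis mult.assoc mult.commute)
  then have AD: "A * D = fps_X ^ k" unfolding EF by simp
  have DI: "D * inverse D = 1" using D0 by (simp add: inverse_mult_eq_1')
  have EI: "inverse E * E = 1" using E0 by (simp add: inverse_mult_eq_1)
  have div1: "fps_X ^ k / D = fps_X ^ k * inverse D" using D0 by (simp add: fps_divide_unit)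
  have div2: "fps_X ^ k / E = fps_X ^ k * inverse E" using E0 by (simp add: fps_divide_unit)
  have A: "A = fps_X ^ k * inverse D"
  proof -
    have "A = A * (D * inverse D)" using DI by simp
    also have "\<dots> = fps_X ^ k * inverse D" using AD by (simp add: mult.assoc[symmetric])
    finally show ?thesis .
  qed
  have "E = D - fps_X ^ k" using DE by simp
  then have "E * inverse D = D * inverse D - fps_X ^ k * inverse D" by (simp add: left_diff_distrib)
  then have "1 - fps_X ^ k / D = E * inverse D" unfolding div1 DI by simp
  then have "inverse (1 - fps_X ^ k / D) = inverse E * D"
    using D0 by (simp add: fps_inverse_mult)
  also have "\<dots> = inverse E * E + inverse E * fps_X ^ k" unfolding DE by (rule distrib_left)
  also have "\<dots> = 1 + fps_X ^ k / E" unfolding EI div2 by (simp add: mult.commute)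
  finally have "1 + fps_X ^ k / E = inverse (1 - fps_X ^ k / D)" ..
  then show ?thesis using A div1 unfolding D_def E_def by simp
qed


theorem proposition6:
  fixes k :: nat
  assumes "k \<ge> 2"
  defines "w \<equiv> 2 # replicate (k - 2) (1::nat)"
  defines "M \<equiv> {[]} \<union> {c. fib_comp c \<and> prefix w c}"
  defines "P \<equiv> {w @ replicate i 1 @ q | i q.
                   q = [] \<or> (fib_comp q \<and> q \<noteq> [] \<and> hd q = 2 \<and> \<not> sublist w q)}"
  shows "free_monoid_with_primes M P \<and> monoid_primes M = P
     \<and> comp_gf P = fps_X ^ k / (1 - fps_X - fps_X ^ 2 + fps_X ^ k)
     \<and> 1 + fps_X ^ k / (1 - fps_X - fps_X ^ 2)
         = inverse (1 - fps_X ^ k / (1 - fps_X - fps_X ^ 2 + fps_X ^ k) :: real fps)"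
proof -
  have W: "w = Wd k" unfolding w_def Wd_def by simp
  have MM: "M = Md k" unfolding M_def Md_def W ..
  have PP: "P = Pd k" unfolding P_def Pd_def W ..
  have fm: "free_monoid_with_primes (Md k) (Pd k)"
    unfolding free_monoid_with_primes_def
  proof (intro conjI ballI)
    show "[] \<in> Md k" by simp
    show "a @ b \<in> Md k" if "a \<in> Md k" "b \<in> Md k" for a b using M_app that .
    show "Pd k \<subseteq> Md k" by (rule P_sub_M)
    show "\<exists>!ps. set ps \<subseteq> Pd k \<and> concat ps = c" if "c \<in> Md k" for c
      using exists_fact[OF assms(1) that] unique_fact by blast
  qed
  have mp: "monoid_primes (Md k) = Pd k"
  proof
    show "Pd k \<subseteq> monoid_primes (Md k)"
    proof
      fix p assume p: "p \<in> Pd k"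
      have "\<not> (\<exists>a\<in>Md k. \<exists>b\<in>Md k. a \<noteq> [] \<and> b \<noteq> [] \<and> p = a @ b)"
      proof
        assume "\<exists>a\<in>Md k. \<exists>b\<in>Md k. a \<noteq> [] \<and> b \<noteq> [] \<and> p = a @ b"
        then obtain a b where ab: "a \<noteq> []" "b \<in> Md k" "b \<noteq> []" "p = a @ b" by blast
        then have "prefix (Wd k) b" by (auto simp: Md_def)
        then show False using P_occ[OF p ab(4)] ab(1) by simp
      qed
      then show "p \<in> monoid_primes (Md k)"
        unfolding monoid_primes_def using p P_sub_M P_ne by blast
    qed
  next
    show "monoid_primes (Md k) \<subseteq> Pd k"
    proof
      fix c assume c: "c \<in> monoid_primes (Md k)"
      then have cM: "c \<in> Md k" and cn: "c \<noteq> []"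
        and nd: "\<not> (\<exists>a\<in>Md k. \<exists>b\<in>Md k. a \<noteq> [] \<and> b \<noteq> [] \<and> c = a @ b)"
        unfolding monoid_primes_def by blast+
      obtain ps where ps: "set ps \<subseteq> Pd k" "concat ps = c" using exists_fact[OF assms(1) cM] by blast
      then obtain p ps' where pps: "ps = p # ps'" using cn by (cases ps) auto
      show "c \<in> Pd k"
      proof (cases ps')
        case Nil then show ?thesis using ps pps by simp
      next
        case (Cons q qs)
        have "q \<noteq> []" using ps pps Cons P_ne by auto
        then have "concat ps' \<noteq> []" using Cons by simp
        moreover have "concat ps' \<in> Md k" using ps pps concat_M[of ps' k] by simp
        moreover have "p \<in> Md k" "p \<noteq> []" using ps pps P_sub_M P_ne by auto
        moreover have "c = p @ concat ps'" using ps pps by simp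
        ultimately have False using nd by blast
        then show ?thesis ..
      qed
    qed
  qed
  have gf: "comp_gf (Pd k) = fps_X ^ k / (1 - fps_X - fps_X ^ 2 + fps_X ^ k)
     \<and> 1 + fps_X ^ k / (1 - fps_X - fps_X ^ 2)
         = inverse (1 - fps_X ^ k / (1 - fps_X - fps_X ^ 2 + fps_X ^ k) :: real fps)"
    by (rule gf_alg[OF assms(1) M_gf[OF assms(1)] decomp[OF assms(1)] Ff_E])
  show ?thesis unfolding MM PP using fm mp gf by blast
qed

end
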